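(* For $n\ge0$ let $\overline{I_n}:=I-I_n\in\Gamma$. The set $S=\{\overline{I_n}\mid n\ge0\}$ is a left denominator set in $\Gamma$, i.e. $I\in S$, $S\cdot S\subset S$, and (i) for every $\overline{I_n}\in S$ and $E\in\Gamma$ there are $\overline{I_m}\in S$ and $E'\in\Gamma$ with $E'\overline{I_n}=\overline{I_m}E$; (ii) if $\overline{I_n}\in S$ and $E\in\Gamma$ satisfy $E\overline{I_n}=0$, then there is $\overline{I_m}\in S$ with $\overline{I_m}E=0$. Moreover, the localized $k$-algebra $\Gamma[S^{-1}]$ (of left fractions) is naturally isomorphic to $\Sigma=\Gamma/M_\infty$.
   Context: $k$ is a commutative ring; matrices are indexed by $\mathbb{N}=\{1,2,\dots\}$. $\Gamma$ is the unital $k$-algebra of $\mathbb{N}\times\mathbb{N}$ matrices over $k$ having only finitely many distinct entries and such that for some $n_A$ every row and column has at most $n_A$ nonzero entries; $I$ is the identity matrix. $M_\infty\subset\Gamma$ is the two-sided ideal of matrices with finitely many nonzero entries, and $\Sigma:=\Gamma/M_\infty$. For $n\ge0$, $I_n$ is the matrix with $(I_n)_{i,j}=1$ if $i=j\le n$ and $0$ otherwise (so $I_0=0$). *)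

theory Defs
  imports "HOL-Algebra.QuotRing"
begin

text \<open>Matrices indexed by N = {1,2,...} are represented as functions nat => nat => 'a
  which vanish whenever an index is 0 (index 0 is padding only).\<close>

type_synonym 'a mat = "nat \<Rightarrow> nat \<Rightarrow> 'a"

definition Gamma :: "('a::comm_ring_1) mat set" where
  "Gamma = {A. (\<forall>i j. (i = 0 \<or> j = 0) \<longrightarrow> A i j = 0)
              \<and> finite {A i j | i j. 1 \<le> i \<and> 1 \<le> j}
              \<and> (\<exists>n::nat. (\<forall>i. finite {j. A i j \<noteq> 0} \<and> card {j. A i j \<noteq> 0} \<le> n)
                        \<and> (\<forall>j. finite {i. A i j \<noteq> 0} \<and> card {i. A i j \<noteq> 0} \<le> n))}"

definition mat_add :: "('a::comm_ring_1) mat \<Rightarrow> 'a mat \<Rightarrow> 'a mat" where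
  "mat_add A B = (\<lambda>i j. A i j + B i j)"

definition mat_zero :: "('a::comm_ring_1) mat" where
  "mat_zero = (\<lambda>i j. 0)"

text \<open>Product: the sum runs over the (finite, for matrices in Gamma) support of row i of A.\<close>
definition mat_mult :: "('a::comm_ring_1) mat \<Rightarrow> 'a mat \<Rightarrow> 'a mat" where
  "mat_mult A B = (\<lambda>i j. \<Sum>l\<in>{l. A i l \<noteq> 0}. A i l * B l j)"

definition mat_I :: "('a::comm_ring_1) mat" where
  "mat_I = (\<lambda>i j. if i = j \<and> 1 \<le> i then 1 else 0)"

definition mat_In :: "nat \<Rightarrow> ('a::comm_ring_1) mat" where
  "mat_In n = (\<lambda>i j. if i = j \<and> 1 \<le> i \<and> i \<le> n then 1 else 0)"

definition mat_Ibar :: "nat \<Rightarrow> ('a::comm_ring_1) mat" where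
  "mat_Ibar n = (\<lambda>i j. mat_I i j - mat_In n i j)"

definition Gamma_ring :: "('a::comm_ring_1) mat ring" where
  "Gamma_ring = \<lparr>carrier = Gamma, monoid.mult = mat_mult, one = mat_I,
                 zero = mat_zero, add = mat_add\<rparr>"

definition M_inf :: "('a::comm_ring_1) mat set" where
  "M_inf = {A \<in> Gamma. finite {(i, j). A i j \<noteq> 0}}"

definition Sigma_ring :: "('a::comm_ring_1) mat set ring" where
  "Sigma_ring = Gamma_ring Quot M_inf"

definition Sigma_proj :: "('a::comm_ring_1) mat \<Rightarrow> 'a mat set" where
  "Sigma_proj A = M_inf +>\<^bsub>Gamma_ring\<^esub> A"

definition S_den :: "('a::comm_ring_1) mat set" where
  "S_den = range mat_Ibar"

text \<open>Left ring of fractions (Ore localization) R[S^-1] given by a ring hom h : R -> Q,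
  in the standard sense: h maps S to units, every element of Q is a left fraction
  h(s)^-1 h(a), and the kernel of h is {a. exists s in S. s a = 0}.
  Q is then (uniquely up to unique isomorphism) the localization R[S^-1].\<close>
definition left_ring_of_fractions ::
  "('a, 'c) ring_scheme \<Rightarrow> 'a set \<Rightarrow> ('b, 'd) ring_scheme \<Rightarrow> ('a \<Rightarrow> 'b) \<Rightarrow> bool" where
  "left_ring_of_fractions R S Q h \<longleftrightarrow>
     ring R \<and> ring Q \<and> S \<subseteq> carrier R \<and> h \<in> ring_hom R Q
     \<and> (\<forall>s\<in>S. h s \<in> Units Q)
     \<and> (\<forall>q\<in>carrier Q. \<exists>s\<in>S. \<exists>a\<in>carrier R. q = inv\<^bsub>Q\<^esub> (h s) \<otimes>\<^bsub>Q\<^esub> h a)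
     \<and> (\<forall>a\<in>carrier R. h a = \<zero>\<^bsub>Q\<^esub> \<longleftrightarrow> (\<exists>s\<in>S. s \<otimes>\<^bsub>R\<^esub> a = \<zero>\<^bsub>R\<^esub>))"

end

theory Submission
  imports Defs
begin

lemma GammaD0:
  assumes "A \<in> Gamma"
  shows "A 0 j = 0" "A i 0 = 0"
  using assms unfolding Gamma_def by auto

lemma GammaD_row: "A \<in> Gamma \<Longrightarrow> finite {j. A i j \<noteq> 0}"
  unfolding Gamma_def by auto
lemma GammaD_col: "A \<in> Gamma \<Longrightarrow> finite {i. A i j \<noteq> 0}"
  unfolding Gamma_def by auto
lemma GammaD_bd: "A \<in> Gamma \<Longrightarrow>
   \<exists>n. (\<forall>i. card {j. A i j \<noteq> 0} \<le> n) \<and> (\<forall>j. card {i. A i j \<noteq> 0} \<le> n)"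
  unfolding Gamma_def by blast

lemma GammaD_vals:
  assumes "A \<in> Gamma"
  shows "finite {A i j | i j. True}"
proof -
  have "{A i j | i j. True} \<subseteq> insert 0 {A i j | i j. 1 \<le> i \<and> 1 \<le> j}"
  proof
    fix x assume "x \<in> {A i j | i j. True}"
    then obtain i j where x: "x = A i j" by blast
    show "x \<in> insert 0 {A i j | i j. 1 \<le> i \<and> 1 \<le> j}"
    proof (cases "i = 0 \<or> j = 0")
      case True then show ?thesis using x GammaD0[OF assms] by auto
    next
      case False then have "1 \<le> i" "1 \<le> j" by auto
      then show ?thesis using x by blast
    qed
  qed
  moreover have "finite {A i j | i j. 1 \<le> i \<and> 1 \<le> j}" using assms unfolding Gamma_def by blast
  ultimately show ?thesis by (meson finite_insert finite_subset)
qed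

lemmas GammaD = GammaD0 GammaD_vals GammaD_row GammaD_col GammaD_bd

lemma GammaI:
  assumes "\<And>j. A 0 j = 0" "\<And>i. A i 0 = 0"
    "finite {A i j | i j. True}"
    "\<And>i. finite {j. A i j \<noteq> 0}" "\<And>j. finite {i. A i j \<noteq> 0}"
    "\<And>i. card {j. A i j \<noteq> 0} \<le> n" "\<And>j. card {i. A i j \<noteq> 0} \<le> n"
  shows "A \<in> Gamma"
proof -
  have "{A i j | i j. 1 \<le> i \<and> 1 \<le> j} \<subseteq> {A i j | i j. True}" by blast
  then have "finite {A i j | i j. 1 \<le> i \<and> 1 \<le> j}" using assms(3) by (rule finite_subset)
  then show ?thesis unfolding Gamma_def mem_Collect_eq
    apply (intro conjI)
      apply (use assms(1,2) in auto)[1]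
     apply assumption
    apply (rule exI[of _ n])
    using assms(4-7) by blast
qed

lemma mult_nz: "mat_mult A B i j \<noteq> 0 \<Longrightarrow> \<exists>l. A i l \<noteq> 0 \<and> B l j \<noteq> 0"
proof (rule ccontr)
  assume h: "mat_mult A B i j \<noteq> 0" "\<not> (\<exists>l. A i l \<noteq> 0 \<and> B l j \<noteq> 0)"
  then have "\<forall>l\<in>{l. A i l \<noteq> 0}. A i l * B l j = 0" by auto
  then have "mat_mult A B i j = 0" unfolding mat_mult_def by (rule sum.neutral)
  with h show False by simp
qed

lemma mult_superset:
  assumes "finite F" "{l. A i l \<noteq> 0} \<subseteq> F"
  shows "mat_mult A B i j = (\<Sum>l\<in>F. A i l * B l j)"
  unfolding mat_mult_def
  by (rule sum.mono_neutral_left) (use assms in auto)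

fun sumsk :: "'a::comm_ring_1 set \<Rightarrow> nat \<Rightarrow> 'a set" where
  "sumsk P 0 = {0}"
| "sumsk P (Suc k) = (\<lambda>(x,y). x + y) ` (P \<times> sumsk P k)"

lemma finite_sumsk: "finite P \<Longrightarrow> finite (sumsk P k)"
  by (induction k) auto

lemma sum_in_sumsk:
  assumes "finite L" "\<And>l. l \<in> L \<Longrightarrow> f l \<in> P"
  shows "sum f L \<in> sumsk P (card L)"
  using assms
proof (induction L rule: finite_induct)
  case empty then show ?case by simp
next
  case (insert x F)
  then show ?case by (auto intro!: image_eqI[where x="(f x, sum f F)"])
qed

lemma mult_Gamma:
  assumes A: "A \<in> Gamma" and B: "B \<in> Gamma"
  shows "mat_mult A B \<in> Gamma"
proof -
  obtain nA where nA: "\<And>i. card {j. A i j \<noteq> 0} \<le> nA" "\<And>j. card {i. A i j \<noteq> 0} \<le> nA"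
    using GammaD(6)[OF A] by blast
  obtain nB where nB: "\<And>i. card {j. B i j \<noteq> 0} \<le> nB" "\<And>j. card {i. B i j \<noteq> 0} \<le> nB"
    using GammaD(6)[OF B] by blast
  have rowsub: "{j. mat_mult A B i j \<noteq> 0} \<subseteq> (\<Union>l\<in>{l. A i l \<noteq> 0}. {j. B l j \<noteq> 0})" for i
    using mult_nz by fastforce
  have colsub: "{i. mat_mult A B i j \<noteq> 0} \<subseteq> (\<Union>l\<in>{l. B l j \<noteq> 0}. {i. A i l \<noteq> 0})" for j
    using mult_nz by fastforce
  have rowfin: "finite {j. mat_mult A B i j \<noteq> 0}" for i
    by (rule finite_subset[OF rowsub]) (use GammaD[OF A] GammaD[OF B] in auto)
  have colfin: "finite {i. mat_mult A B i j \<noteq> 0}" for j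
    by (rule finite_subset[OF colsub]) (use GammaD[OF A] GammaD[OF B] in auto)
  have rowcard: "card {j. mat_mult A B i j \<noteq> 0} \<le> nA * nB" for i
  proof -
    have "card {j. mat_mult A B i j \<noteq> 0} \<le> card (\<Union>l\<in>{l. A i l \<noteq> 0}. {j. B l j \<noteq> 0})"
      by (rule card_mono[OF _ rowsub]) (use GammaD[OF A] GammaD[OF B] in auto)
    also have "\<dots> \<le> (\<Sum>l\<in>{l. A i l \<noteq> 0}. card {j. B l j \<noteq> 0})"
      by (rule card_UN_le) (use GammaD[OF A] in auto)
    also have "\<dots> \<le> card {l. A i l \<noteq> 0} * nB"
      using sum_bounded_above[of "{l. A i l \<noteq> 0}" "\<lambda>l. card {j. B l j \<noteq> 0}" nB] nB by auto
    also have "\<dots> \<le> nA * nB" using nA by simp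
    finally show ?thesis .
  qed
  have colcard: "card {i. mat_mult A B i j \<noteq> 0} \<le> nA * nB" for j
  proof -
    have "card {i. mat_mult A B i j \<noteq> 0} \<le> card (\<Union>l\<in>{l. B l j \<noteq> 0}. {i. A i l \<noteq> 0})"
      by (rule card_mono[OF _ colsub]) (use GammaD[OF A] GammaD[OF B] in auto)
    also have "\<dots> \<le> (\<Sum>l\<in>{l. B l j \<noteq> 0}. card {i. A i l \<noteq> 0})"
      by (rule card_UN_le) (use GammaD[OF B] in auto)
    also have "\<dots> \<le> card {l. B l j \<noteq> 0} * nA"
      using sum_bounded_above[of "{l. B l j \<noteq> 0}" "\<lambda>l. card {i. A i l \<noteq> 0}" nA] nA by auto
    also have "\<dots> \<le> nA * nB" using nB by (simp add: mult.commute)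
    finally show ?thesis .
  qed
  define P where "P = (\<lambda>(x,y). x * y) ` ({A i j | i j. True} \<times> {B i j | i j. True})"
  have Pfin: "finite P" unfolding P_def using GammaD(3)[OF A] GammaD(3)[OF B] by auto
  have vals: "{mat_mult A B i j | i j. True} \<subseteq> (\<Union>k\<in>{..nA}. sumsk P k)"
  proof safe
    fix i j
    have "mat_mult A B i j \<in> sumsk P (card {l. A i l \<noteq> 0})"
      unfolding mat_mult_def
      by (rule sum_in_sumsk) (use GammaD[OF A] in \<open>auto simp: P_def\<close>)
    then show "mat_mult A B i j \<in> (\<Union>k\<in>{..nA}. sumsk P k)" using nA(1)[of i] by auto
  qed
  have valfin: "finite {mat_mult A B i j | i j. True}"
    by (rule finite_subset[OF vals]) (use Pfin finite_sumsk in auto)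
  have z1: "mat_mult A B 0 j = 0" for j
    unfolding mat_mult_def using GammaD(1)[OF A] by simp
  have z2: "mat_mult A B i 0 = 0" for i
    unfolding mat_mult_def using GammaD(2)[OF B] by simp
  show ?thesis
    by (rule GammaI[where n="nA*nB", OF z1 z2 valfin rowfin colfin rowcard colcard])
qed


lemma add_Gamma:
  assumes A: "A \<in> Gamma" and B: "B \<in> Gamma"
  shows "mat_add A B \<in> Gamma"
proof -
  obtain nA where nA: "\<And>i. card {j. A i j \<noteq> 0} \<le> nA" "\<And>j. card {i. A i j \<noteq> 0} \<le> nA"
    using GammaD(6)[OF A] by blast
  obtain nB where nB: "\<And>i. card {j. B i j \<noteq> 0} \<le> nB" "\<And>j. card {i. B i j \<noteq> 0} \<le> nB"
    using GammaD(6)[OF B] by blast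
  have rs: "{j. mat_add A B i j \<noteq> 0} \<subseteq> {j. A i j \<noteq> 0} \<union> {j. B i j \<noteq> 0}" for i
    unfolding mat_add_def by auto
  have cs: "{j. mat_add A B j i \<noteq> 0} \<subseteq> {j. A j i \<noteq> 0} \<union> {j. B j i \<noteq> 0}" for i
    unfolding mat_add_def by auto
  have rf: "finite {j. mat_add A B i j \<noteq> 0}" for i
    by (rule finite_subset[OF rs]) (simp add: GammaD(4)[OF A] GammaD(4)[OF B])
  have cf: "finite {j. mat_add A B j i \<noteq> 0}" for i
    by (rule finite_subset[OF cs]) (simp add: GammaD(5)[OF A] GammaD(5)[OF B])
  have rc: "card {j. mat_add A B i j \<noteq> 0} \<le> nA + nB" for i
  proof -
    have "card {j. mat_add A B i j \<noteq> 0} \<le> card ({j. A i j \<noteq> 0} \<union> {j. B i j \<noteq> 0})"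
      by (rule card_mono[OF _ rs]) (simp add: GammaD(4)[OF A] GammaD(4)[OF B])
    also have "\<dots> \<le> card {j. A i j \<noteq> 0} + card {j. B i j \<noteq> 0}" by (rule card_Un_le)
    finally show ?thesis using nA(1)[of i] nB(1)[of i] by linarith
  qed
  have cc: "card {j. mat_add A B j i \<noteq> 0} \<le> nA + nB" for i
  proof -
    have "card {j. mat_add A B j i \<noteq> 0} \<le> card ({j. A j i \<noteq> 0} \<union> {j. B j i \<noteq> 0})"
      by (rule card_mono[OF _ cs]) (simp add: GammaD(5)[OF A] GammaD(5)[OF B])
    also have "\<dots> \<le> card {j. A j i \<noteq> 0} + card {j. B j i \<noteq> 0}" by (rule card_Un_le)
    finally show ?thesis using nA(2)[of i] nB(2)[of i] by linarith
  qed
  have vs: "{mat_add A B i j | i j. True} \<subseteq> (\<lambda>(x,y). x + y) ` ({A i j | i j. True} \<times> {B i j | i j. True})"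
    unfolding mat_add_def by force
  have vf: "finite {mat_add A B i j | i j. True}"
    by (rule finite_subset[OF vs]) (intro finite_imageI finite_cartesian_product GammaD(3)[OF A] GammaD(3)[OF B])
  have z1: "mat_add A B 0 j = 0" for j unfolding mat_add_def by (simp add: GammaD(1)[OF A] GammaD(1)[OF B])
  have z2: "mat_add A B j 0 = 0" for j unfolding mat_add_def by (simp add: GammaD(2)[OF A] GammaD(2)[OF B])
  show ?thesis by (rule GammaI[OF z1 z2 vf rf cf rc cc])
qed

lemma neg_Gamma:
  assumes A: "A \<in> Gamma"
  shows "(\<lambda>i j. - A i j) \<in> Gamma"
proof -
  obtain nA where nA: "\<And>i. card {j. A i j \<noteq> 0} \<le> nA" "\<And>j. card {i. A i j \<noteq> 0} \<le> nA"
    using GammaD(6)[OF A] by blast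
  have vs: "{- A i j | i j. True} = uminus ` {A i j | i j. True}" by blast
  show ?thesis
    by (rule GammaI[where n=nA]) (use GammaD[OF A] nA vs in auto)
qed

lemma zero_Gamma: "mat_zero \<in> Gamma"
  by (rule GammaI[where n=0]) (auto simp: mat_zero_def)

lemma diag_Gamma:
  assumes "\<And>i j. A i j \<noteq> 0 \<Longrightarrow> i = j \<and> 1 \<le> i" "\<And>i j. A i j \<in> {0, 1}"
  shows "A \<in> Gamma"
proof (rule GammaI[where n=1])
  show "A 0 j = 0" for j using assms(1)[of 0 j] by auto
  show "A i 0 = 0" for i using assms(1)[of i 0] by auto
  show "finite {A i j |i j. True}" by (rule finite_subset[of _ "{0,1}"]) (use assms(2) in auto)
  have r: "{j. A i j \<noteq> 0} \<subseteq> {i}" for i using assms(1) by auto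
  have c: "{j. A j i \<noteq> 0} \<subseteq> {i}" for i using assms(1) by auto
  show "finite {j. A i j \<noteq> 0}" for i using r finite_subset by blast
  show "finite {j. A j i \<noteq> 0}" for i using c finite_subset by blast
  show "card {j. A i j \<noteq> 0} \<le> 1" for i using card_mono[OF _ r[of i]] by simp
  show "card {j. A j i \<noteq> 0} \<le> 1" for i using card_mono[OF _ c[of i]] by simp
qed

lemma I_Gamma: "mat_I \<in> Gamma"
  by (rule diag_Gamma) (auto simp: mat_I_def split: if_splits)
lemma In_Gamma: "mat_In n \<in> Gamma"
  by (rule diag_Gamma) (auto simp: mat_In_def split: if_splits)
lemma Ibar_Gamma: "mat_Ibar n \<in> Gamma"
  by (rule diag_Gamma) (auto simp: mat_Ibar_def mat_I_def mat_In_def split: if_splits)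

lemma Ibar_eq: "mat_Ibar n i j = (if i = j \<and> n < i then 1 else 0)"
  by (auto simp: mat_Ibar_def mat_I_def mat_In_def)

lemma Ibar_mult: "mat_mult (mat_Ibar m) E i j = (if m < i then E i j else 0)"
proof -
  have "{l. mat_Ibar m i l \<noteq> 0} = (if m < i then {i} else {})" by (auto simp: Ibar_eq)
  then show ?thesis unfolding mat_mult_def by (simp add: Ibar_eq)
qed

lemma mult_Ibar:
  assumes "E \<in> Gamma"
  shows "mat_mult E (mat_Ibar n) i j = (if n < j then E i j else 0)"
proof -
  have "mat_mult E (mat_Ibar n) i j = (\<Sum>l\<in>{l. E i l \<noteq> 0}. if j = l then (if n < j then E i l else 0) else 0)"
    unfolding mat_mult_def by (rule sum.cong) (auto simp: Ibar_eq)
  also have "\<dots> = (if n < j then E i j else 0)"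
    by (subst sum.delta') (auto simp: GammaD(4)[OF assms])
  finally show ?thesis .
qed

lemma Ibar0: "mat_Ibar 0 = mat_I"
  by (intro ext) (simp add: Ibar_eq mat_I_def)

lemma I_mult: "mat_mult mat_I E i j = (if 0 < i then E i j else 0)"
  using Ibar_mult[of 0 E i j] by (simp add: Ibar0)

lemma mult_I: "E \<in> Gamma \<Longrightarrow> mat_mult E mat_I i j = (if 0 < j then E i j else 0)"
  using mult_Ibar[of E 0 i j] by (simp add: Ibar0)

lemma mult_assoc_Gamma:
  assumes A: "A \<in> Gamma" and B: "B \<in> Gamma" and C: "C \<in> Gamma"
  shows "mat_mult (mat_mult A B) C = mat_mult A (mat_mult B C)"
proof (intro ext)
  fix i j
  define K where "K = {k. A i k \<noteq> 0}"
  define L where "L = (\<Union>k\<in>K. {l. B k l \<noteq> 0})"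
  have Kf: "finite K" unfolding K_def by (rule GammaD(4)[OF A])
  have Lf: "finite L" unfolding L_def using Kf GammaD(4)[OF B] by auto
  have sub: "{l. mat_mult A B i l \<noteq> 0} \<subseteq> L" unfolding L_def K_def using mult_nz by fastforce
  have "mat_mult (mat_mult A B) C i j = (\<Sum>l\<in>L. mat_mult A B i l * C l j)"
    by (rule mult_superset[where B=C and A="mat_mult A B" and i=i, OF Lf sub])
  also have "\<dots> = (\<Sum>l\<in>L. \<Sum>k\<in>K. A i k * B k l * C l j)"
    unfolding mat_mult_def K_def by (simp add: sum_distrib_right)
  also have "\<dots> = (\<Sum>k\<in>K. \<Sum>l\<in>L. A i k * B k l * C l j)" by (rule sum.swap)
  also have "\<dots> = (\<Sum>k\<in>K. A i k * mat_mult B C k j)"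
  proof (rule sum.cong[OF refl])
    fix k assume "k \<in> K"
    then have "{l. B k l \<noteq> 0} \<subseteq> L" unfolding L_def by auto
    then have "mat_mult B C k j = (\<Sum>l\<in>L. B k l * C l j)" by (rule mult_superset[OF Lf])
    then show "(\<Sum>l\<in>L. A i k * B k l * C l j) = A i k * mat_mult B C k j"
      by (simp add: sum_distrib_left mult.assoc)
  qed
  also have "\<dots> = mat_mult A (mat_mult B C) i j" unfolding mat_mult_def K_def ..
  finally show "mat_mult (mat_mult A B) C i j = mat_mult A (mat_mult B C) i j" .
qed

lemma distr_l:
  assumes A: "A \<in> Gamma" and B: "B \<in> Gamma" and C: "C \<in> Gamma"
  shows "mat_mult (mat_add A B) C = mat_add (mat_mult A C) (mat_mult B C)"
proof (intro ext)
  fix i j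
  define F where "F = {l. A i l \<noteq> 0} \<union> {l. B i l \<noteq> 0}"
  have Ff: "finite F" unfolding F_def using GammaD(4)[OF A] GammaD(4)[OF B] by auto
  have s1: "{l. mat_add A B i l \<noteq> 0} \<subseteq> F" unfolding F_def mat_add_def by auto
  show "mat_mult (mat_add A B) C i j = mat_add (mat_mult A C) (mat_mult B C) i j"
    unfolding mat_add_def
    apply (subst mult_superset[where B=C and A="\<lambda>i j. A i j + B i j" and i=i, OF Ff s1[unfolded mat_add_def]])
    apply (subst mult_superset[OF Ff, of A]) apply (simp add: F_def)
    apply (subst mult_superset[OF Ff, of B]) apply (simp add: F_def)
    by (simp add: sum.distrib distrib_right)
qed

lemma distr_r:
  assumes A: "A \<in> Gamma"
  shows "mat_mult A (mat_add B C) = mat_add (mat_mult A B) (mat_mult A C)"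
  unfolding mat_mult_def mat_add_def by (simp add: sum.distrib distrib_left)


lemma GR_simps [simp]:
  "carrier Gamma_ring = Gamma" "mult Gamma_ring = mat_mult" "one Gamma_ring = mat_I"
  "zero Gamma_ring = mat_zero" "add Gamma_ring = mat_add"
  by (simp_all add: Gamma_ring_def)

lemma I_mult_eq: "E \<in> Gamma \<Longrightarrow> mat_mult mat_I E = E"
  by (intro ext) (auto simp: I_mult GammaD(1))

lemma mult_I_eq: "E \<in> Gamma \<Longrightarrow> mat_mult E mat_I = E"
  by (intro ext) (auto simp: mult_I GammaD(2))

lemma ring_Gamma: "ring (Gamma_ring :: ('a::comm_ring_1) mat ring)"
proof (rule ringI)
  show "abelian_group (Gamma_ring :: 'a mat ring)"
  proof (rule abelian_groupI, simp_all)
    show "\<And>x y. x \<in> Gamma \<Longrightarrow> y \<in> Gamma \<Longrightarrow> mat_add x y \<in> (Gamma :: 'a mat set)" by (rule add_Gamma)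
    show "(mat_zero :: 'a mat) \<in> Gamma" by (rule zero_Gamma)
    show "\<And>x y z. mat_add (mat_add x y) z = mat_add x (mat_add (y :: 'a mat) z)"
      by (simp add: mat_add_def add.assoc)
    show "\<And>x y. mat_add x y = mat_add y (x :: 'a mat)" by (simp add: mat_add_def add.commute)
    show "\<And>x. mat_add mat_zero x = (x :: 'a mat)" by (simp add: mat_add_def mat_zero_def)
    show "\<exists>y\<in>Gamma. mat_add y x = mat_zero" if "x \<in> (Gamma :: 'a mat set)" for x
      by (rule bexI[of _ "\<lambda>i j. - x i j"]) (auto simp: mat_add_def mat_zero_def neg_Gamma that)
  qed
  show "monoid (Gamma_ring :: 'a mat ring)"
    by (rule monoidI) (auto simp: mult_Gamma I_Gamma mult_assoc_Gamma I_mult_eq mult_I_eq)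
qed (auto simp: distr_l distr_r)

lemma a_inv_Gamma: "A \<in> Gamma \<Longrightarrow> a_inv (Gamma_ring :: ('a::comm_ring_1) mat ring) A = (\<lambda>i j. - A i j)"
  by (rule abelian_group.minus_equality[OF ring.is_abelian_group[OF ring_Gamma]])
     (auto simp: mat_add_def mat_zero_def neg_Gamma)

lemma fin_pairs_bd: "finite {(i, j). (A::'a::zero mat) i j \<noteq> 0} \<longleftrightarrow> (\<exists>N. \<forall>i j. A i j \<noteq> 0 \<longrightarrow> i \<le> N \<and> j \<le> N)"
proof
  assume "finite {(i, j). A i j \<noteq> 0}"
  then have "finite ((\<lambda>(i,j). max i j) ` {(i, j). A i j \<noteq> 0})" by simp
  then obtain N where "\<forall>x\<in>(\<lambda>(i,j). max i j) ` {(i, j). A i j \<noteq> 0}. x \<le> N"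
    using finite_nat_set_iff_bounded_le by blast
  then have "\<forall>i j. A i j \<noteq> 0 \<longrightarrow> i \<le> N \<and> j \<le> N" by fastforce
  then show "\<exists>N. \<forall>i j. A i j \<noteq> 0 \<longrightarrow> i \<le> N \<and> j \<le> N" ..
next
  assume "\<exists>N. \<forall>i j. A i j \<noteq> 0 \<longrightarrow> i \<le> N \<and> j \<le> N"
  then obtain N where "\<forall>i j. A i j \<noteq> 0 \<longrightarrow> i \<le> N \<and> j \<le> N" by blast
  then have "{(i, j). A i j \<noteq> 0} \<subseteq> {..N} \<times> {..N}" by auto
  then show "finite {(i, j). A i j \<noteq> 0}" using finite_subset by blast
qed

lemma Minf_iff: "A \<in> M_inf \<longleftrightarrow> A \<in> Gamma \<and> (\<exists>N. \<forall>i j. A i j \<noteq> 0 \<longrightarrow> i \<le> N \<and> j \<le> N)"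
  unfolding M_inf_def using fin_pairs_bd[of A] by auto

lemma Minf_mult_left:
  assumes A: "A \<in> M_inf" and X: "X \<in> Gamma"
  shows "mat_mult X A \<in> M_inf"
proof -
  from A obtain N where N: "\<forall>i j. A i j \<noteq> 0 \<longrightarrow> i \<le> N \<and> j \<le> N" and AG: "A \<in> Gamma"
    unfolding Minf_iff by blast
  have "finite (\<Union>l\<in>{..N}. {i. X i l \<noteq> 0})" using GammaD(5)[OF X] by auto
  then obtain M where M: "\<forall>i\<in>(\<Union>l\<in>{..N}. {i. X i l \<noteq> 0}). i \<le> M"
    using finite_nat_set_iff_bounded_le by blast
  have "\<forall>i j. mat_mult X A i j \<noteq> 0 \<longrightarrow> i \<le> max N M \<and> j \<le> max N M"
  proof (intro allI impI)
    fix i j assume "mat_mult X A i j \<noteq> 0"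
    then obtain l where "X i l \<noteq> 0" "A l j \<noteq> 0" using mult_nz by blast
    then show "i \<le> max N M \<and> j \<le> max N M" using N M by fastforce
  qed
  then show ?thesis unfolding Minf_iff using mult_Gamma[OF X AG] by blast
qed

lemma Minf_mult_right:
  assumes A: "A \<in> M_inf" and X: "X \<in> Gamma"
  shows "mat_mult A X \<in> M_inf"
proof -
  from A obtain N where N: "\<forall>i j. A i j \<noteq> 0 \<longrightarrow> i \<le> N \<and> j \<le> N" and AG: "A \<in> Gamma"
    unfolding Minf_iff by blast
  have "finite (\<Union>l\<in>{..N}. {j. X l j \<noteq> 0})" using GammaD(4)[OF X] by auto
  then obtain M where M: "\<forall>j\<in>(\<Union>l\<in>{..N}. {j. X l j \<noteq> 0}). j \<le> M"
    using finite_nat_set_iff_bounded_le by blast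
  have "\<forall>i j. mat_mult A X i j \<noteq> 0 \<longrightarrow> i \<le> max N M \<and> j \<le> max N M"
  proof (intro allI impI)
    fix i j assume "mat_mult A X i j \<noteq> 0"
    then obtain l where "A i l \<noteq> 0" "X l j \<noteq> 0" using mult_nz by blast
    then show "i \<le> max N M \<and> j \<le> max N M" using N M by fastforce
  qed
  then show ?thesis unfolding Minf_iff using mult_Gamma[OF AG X] by blast
qed

lemma ideal_Minf: "ideal M_inf (Gamma_ring :: ('a::comm_ring_1) mat ring)"
proof (rule idealI[OF ring_Gamma])
  show "subgroup (M_inf :: 'a mat set) (add_monoid Gamma_ring)"
  proof (rule subgroup.intro)
    show "(M_inf :: 'a mat set) \<subseteq> carrier (add_monoid Gamma_ring)" unfolding M_inf_def by auto
    have "mat_add x y \<in> M_inf" if "x \<in> M_inf" "y \<in> (M_inf :: 'a mat set)" for x y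
    proof -
      from that obtain N1 N2 where that': "\<forall>i j. x i j \<noteq> 0 \<longrightarrow> i \<le> N1 \<and> j \<le> N1"
        "\<forall>i j. y i j \<noteq> 0 \<longrightarrow> i \<le> N2 \<and> j \<le> N2" and xy: "x \<in> Gamma" "y \<in> Gamma"
        unfolding Minf_iff by blast
      have "\<forall>i j. mat_add x y i j \<noteq> 0 \<longrightarrow> i \<le> max N1 N2 \<and> j \<le> max N1 N2"
      proof (intro allI impI)
        fix i j assume "mat_add x y i j \<noteq> 0"
        then have "x i j \<noteq> 0 \<or> y i j \<noteq> 0" by (auto simp: mat_add_def)
        then show "i \<le> max N1 N2 \<and> j \<le> max N1 N2" using that' by (auto simp: le_max_iff_disj)
      qed
      then show ?thesis unfolding Minf_iff using add_Gamma[OF xy] by blast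
    qed
    then show "x \<otimes>\<^bsub>add_monoid Gamma_ring\<^esub> y \<in> M_inf" if "x \<in> M_inf" "y \<in> (M_inf :: 'a mat set)" for x y
      using that by simp
    have "(mat_zero :: 'a mat) \<in> M_inf" unfolding Minf_iff using zero_Gamma by (auto simp: mat_zero_def)
    then show "\<one>\<^bsub>add_monoid (Gamma_ring :: 'a mat ring)\<^esub> \<in> M_inf" by simp
    show "inv\<^bsub>add_monoid Gamma_ring\<^esub> x \<in> M_inf" if "x \<in> (M_inf :: 'a mat set)" for x
    proof -
      from that obtain N where "\<forall>i j. x i j \<noteq> 0 \<longrightarrow> i \<le> N \<and> j \<le> N" "x \<in> Gamma"
        unfolding Minf_iff by blast
      moreover have "inv\<^bsub>add_monoid Gamma_ring\<^esub> x = (\<lambda>i j. - x i j)"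
        using a_inv_Gamma[OF \<open>x \<in> Gamma\<close>] unfolding a_inv_def .
      ultimately show ?thesis unfolding Minf_iff by (auto simp: neg_Gamma)
    qed
  qed
qed (auto simp: Minf_mult_left Minf_mult_right)


lemma Ibar_mult_zero: "mat_mult (mat_Ibar n) A = mat_zero \<longleftrightarrow> (\<forall>i j. n < i \<longrightarrow> A i j = 0)"
  by (auto simp: fun_eq_iff Ibar_mult mat_zero_def)

lemma kernel_iff:
  assumes A: "A \<in> Gamma"
  shows "A \<in> M_inf \<longleftrightarrow> (\<exists>n. mat_mult (mat_Ibar n) A = mat_zero)"
proof
  assume "A \<in> M_inf"
  then obtain N where "\<forall>i j. A i j \<noteq> 0 \<longrightarrow> i \<le> N \<and> j \<le> N" unfolding Minf_iff by blast
  then have "\<forall>i j. N < i \<longrightarrow> A i j = 0" by (meson not_le)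
  then show "\<exists>n. mat_mult (mat_Ibar n) A = mat_zero" unfolding Ibar_mult_zero by blast
next
  assume "\<exists>n. mat_mult (mat_Ibar n) A = mat_zero"
  then obtain n where n: "\<forall>i j. n < i \<longrightarrow> A i j = 0" unfolding Ibar_mult_zero by blast
  have "finite (\<Union>i\<in>{..n}. {j. A i j \<noteq> 0})" using GammaD(4)[OF A] by auto
  then obtain M where M: "\<forall>j\<in>(\<Union>i\<in>{..n}. {j. A i j \<noteq> 0}). j \<le> M"
    using finite_nat_set_iff_bounded_le by blast
  have "\<forall>i j. A i j \<noteq> 0 \<longrightarrow> i \<le> max n M \<and> j \<le> max n M"
  proof (intro allI impI)
    fix i j assume h: "A i j \<noteq> 0"
    then have "i \<le> n" using n not_le by blast
    then show "i \<le> max n M \<and> j \<le> max n M" using M h by fastforce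
  qed
  then show "A \<in> M_inf" unfolding Minf_iff using A by blast
qed

lemma In_Minf: "mat_In n \<in> M_inf"
  unfolding Minf_iff using In_Gamma by (auto simp: mat_In_def split: if_splits)

lemma Ibar_In: "mat_add (mat_Ibar n) (mat_In n) = mat_I"
  by (auto simp: fun_eq_iff mat_add_def mat_Ibar_def)

theorem proposition3p8:
  shows "(mat_I :: ('a::comm_ring_1) mat) \<in> S_den
    \<and> (\<forall>s\<in>(S_den :: 'a mat set). \<forall>t\<in>S_den. mat_mult s t \<in> S_den)
    \<and> (\<forall>n. \<forall>E\<in>(Gamma :: 'a mat set). \<exists>m. \<exists>E'\<in>Gamma.
          mat_mult E' (mat_Ibar n) = mat_mult (mat_Ibar m) E)
    \<and> (\<forall>n. \<forall>E\<in>(Gamma :: 'a mat set). mat_mult E (mat_Ibar n) = mat_zero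
          \<longrightarrow> (\<exists>m. mat_mult (mat_Ibar m) E = mat_zero))
    \<and> left_ring_of_fractions (Gamma_ring :: 'a mat ring) S_den Sigma_ring Sigma_proj"
proof (intro conjI)
  show "(mat_I :: 'a mat) \<in> S_den" unfolding S_den_def using Ibar0 by (metis rangeI)
  show "\<forall>s\<in>(S_den :: 'a mat set). \<forall>t\<in>S_den. mat_mult s t \<in> S_den"
  proof (intro ballI)
    fix s t :: "'a mat" assume "s \<in> S_den" "t \<in> S_den"
    then obtain a b where ab: "s = mat_Ibar a" "t = mat_Ibar b" unfolding S_den_def by blast
    have "mat_mult s t = mat_Ibar (max a b)"
      by (auto simp: ab fun_eq_iff Ibar_mult Ibar_eq)
    then show "mat_mult s t \<in> S_den" unfolding S_den_def by simp
  qed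
  show "\<forall>n. \<forall>E\<in>(Gamma :: 'a mat set). \<exists>m. \<exists>E'\<in>Gamma.
          mat_mult E' (mat_Ibar n) = mat_mult (mat_Ibar m) E"
  proof (intro allI ballI)
    fix n and E :: "'a mat" assume E: "E \<in> Gamma"
    have "finite (\<Union>j\<in>{..n}. {i. E i j \<noteq> 0})" using GammaD(5)[OF E] by auto
    then obtain m where m: "\<forall>i\<in>(\<Union>j\<in>{..n}. {i. E i j \<noteq> 0}). i \<le> m"
      using finite_nat_set_iff_bounded_le by blast
    define E' where "E' = mat_mult (mat_Ibar m) E"
    have E'G: "E' \<in> Gamma" unfolding E'_def by (rule mult_Gamma[OF Ibar_Gamma E])
    have "mat_mult E' (mat_Ibar n) = mat_mult (mat_Ibar m) E"
    proof (intro ext)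
      fix i j
      show "mat_mult E' (mat_Ibar n) i j = mat_mult (mat_Ibar m) E i j"
        unfolding mult_Ibar[OF E'G] unfolding E'_def Ibar_mult
        using m by (auto simp: not_less) (metis atMost_iff not_le)
    qed
    then show "\<exists>m. \<exists>E'\<in>Gamma. mat_mult E' (mat_Ibar n) = mat_mult (mat_Ibar m) E"
      using E'G by blast
  qed
  show "\<forall>n. \<forall>E\<in>(Gamma :: 'a mat set). mat_mult E (mat_Ibar n) = mat_zero
          \<longrightarrow> (\<exists>m. mat_mult (mat_Ibar m) E = mat_zero)"
  proof (intro allI ballI impI)
    fix n and E :: "'a mat" assume E: "E \<in> Gamma" and h: "mat_mult E (mat_Ibar n) = mat_zero"
    then have z: "\<forall>i j. n < j \<longrightarrow> E i j = 0"
      by (metis (full_types) mult_Ibar mat_zero_def)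
    have "finite (\<Union>j\<in>{..n}. {i. E i j \<noteq> 0})" using GammaD(5)[OF E] by auto
    then obtain m where m: "\<forall>i\<in>(\<Union>j\<in>{..n}. {i. E i j \<noteq> 0}). i \<le> m"
      using finite_nat_set_iff_bounded_le by blast
    have "\<forall>i j. m < i \<longrightarrow> E i j = 0"
    proof (intro allI impI)
      fix i j assume "m < i"
      show "E i j = 0"
      proof (rule ccontr)
        assume "E i j \<noteq> 0"
        then have "j \<le> n" using z not_le by blast
        then show False using m \<open>E i j \<noteq> 0\<close> \<open>m < i\<close> by fastforce
      qed
    qed
    then show "\<exists>m. mat_mult (mat_Ibar m) E = mat_zero" unfolding Ibar_mult_zero by blast
  qed
  show "left_ring_of_fractions (Gamma_ring :: 'a mat ring) S_den Sigma_ring Sigma_proj"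
  proof -
    interpret I: ideal "M_inf :: 'a mat set" "Gamma_ring :: 'a mat ring" by (rule ideal_Minf)
    have RG: "ring (Gamma_ring :: 'a mat ring)" by (rule ring_Gamma)
    have RQ: "ring (Sigma_ring :: 'a mat set ring)" unfolding Sigma_ring_def by (rule I.quotient_is_ring)
    interpret Q: ring "Sigma_ring :: 'a mat set ring" by (rule RQ)
    have hp: "(Sigma_proj :: 'a mat \<Rightarrow> 'a mat set) = a_r_coset Gamma_ring M_inf"
      by (intro ext) (simp add: Sigma_proj_def)
    have hom: "(Sigma_proj :: 'a mat \<Rightarrow> 'a mat set) \<in> ring_hom Gamma_ring Sigma_ring"
      unfolding hp Sigma_ring_def by (rule I.rcos_ring_hom)
    have SG: "(S_den :: 'a mat set) \<subseteq> carrier Gamma_ring" unfolding S_den_def using Ibar_Gamma by auto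
    have one: "Sigma_proj (mat_Ibar n :: 'a mat) = \<one>\<^bsub>Sigma_ring\<^esub>" for n
    proof -
      have "Sigma_proj (mat_In n :: 'a mat) = M_inf"
        unfolding Sigma_proj_def using ring.a_rcos_zero[OF RG ideal_Minf In_Minf] .
      then have z: "Sigma_proj (mat_In n :: 'a mat) = \<zero>\<^bsub>Sigma_ring\<^esub>"
        by (simp add: Sigma_ring_def FactRing_def)
      have "Sigma_proj (mat_I :: 'a mat) = Sigma_proj (mat_add (mat_Ibar n) (mat_In n))"
        by (simp add: Ibar_In)
      also have "\<dots> = Sigma_proj (mat_Ibar n) \<oplus>\<^bsub>Sigma_ring\<^esub> Sigma_proj (mat_In n)"
      proof -
        have "Sigma_proj (mat_Ibar n \<oplus>\<^bsub>Gamma_ring\<^esub> (mat_In n :: 'a mat)) = Sigma_proj (mat_Ibar n) \<oplus>\<^bsub>Sigma_ring\<^esub> Sigma_proj (mat_In n :: 'a mat)"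
          by (rule ring_hom_add[OF hom]) (simp_all add: Ibar_Gamma In_Gamma)
        then show ?thesis by simp
      qed
      also have "\<dots> = Sigma_proj (mat_Ibar n)"
        unfolding z by (rule Q.r_zero[OF ring_hom_closed[OF hom]]) (simp add: Ibar_Gamma)
      finally have "Sigma_proj (mat_Ibar n) = Sigma_proj (mat_I :: 'a mat)" by simp
      also have "\<dots> = \<one>\<^bsub>Sigma_ring\<^esub>"
        using ring_hom_one[OF hom] by simp
      finally show ?thesis .
    qed
    have units: "\<forall>s\<in>S_den. Sigma_proj (s :: 'a mat) \<in> Units Sigma_ring"
      unfolding S_den_def using one Q.Units_one_closed by auto
    have fr: "\<forall>q\<in>carrier Sigma_ring. \<exists>s\<in>S_den. \<exists>a\<in>carrier Gamma_ring.
        q = inv\<^bsub>Sigma_ring\<^esub> (Sigma_proj s) \<otimes>\<^bsub>Sigma_ring\<^esub> Sigma_proj (a :: 'a mat)"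
    proof
      fix q assume "q \<in> carrier (Sigma_ring :: 'a mat set ring)"
      then obtain a :: "'a mat" where a: "a \<in> Gamma" "q = M_inf +>\<^bsub>Gamma_ring\<^esub> a"
        unfolding Sigma_ring_def FactRing_def A_RCOSETS_def' by auto
      have qa: "q = Sigma_proj a" using a by (simp add: Sigma_proj_def)
      have "inv\<^bsub>Sigma_ring\<^esub> (Sigma_proj (mat_Ibar 0)) \<otimes>\<^bsub>Sigma_ring\<^esub> Sigma_proj (a :: 'a mat) = q"
        unfolding one qa
        using Q.inv_one Q.l_one[OF ring_hom_closed[OF hom]] a
        by simp
      moreover have "mat_Ibar 0 \<in> S_den" unfolding S_den_def by simp
      ultimately show "\<exists>s\<in>S_den. \<exists>a'\<in>carrier Gamma_ring.
        q = inv\<^bsub>Sigma_ring\<^esub> (Sigma_proj s) \<otimes>\<^bsub>Sigma_ring\<^esub> Sigma_proj (a' :: 'a mat)"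
        using a by auto
    qed
    have ker: "\<forall>a\<in>carrier (Gamma_ring :: 'a mat ring). Sigma_proj a = \<zero>\<^bsub>Sigma_ring\<^esub> \<longleftrightarrow>
        (\<exists>s\<in>S_den. s \<otimes>\<^bsub>Gamma_ring\<^esub> a = \<zero>\<^bsub>Gamma_ring\<^esub>)"
    proof
      fix a :: "'a mat" assume aG: "a \<in> carrier Gamma_ring"
      have "Sigma_proj a = \<zero>\<^bsub>Sigma_ring\<^esub> \<longleftrightarrow> M_inf +>\<^bsub>Gamma_ring\<^esub> a = M_inf"
        by (simp add: Sigma_proj_def Sigma_ring_def FactRing_def)
      also have "\<dots> \<longleftrightarrow> a \<in> M_inf"
        using I.rcos_const_imp_mem[of a] ring.a_rcos_zero[OF RG ideal_Minf, of a] aG by auto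
      also have "\<dots> \<longleftrightarrow> (\<exists>n. mat_mult (mat_Ibar n) a = mat_zero)"
        using kernel_iff aG by simp
      also have "\<dots> \<longleftrightarrow> (\<exists>s\<in>S_den. s \<otimes>\<^bsub>Gamma_ring\<^esub> a = \<zero>\<^bsub>Gamma_ring\<^esub>)"
        unfolding S_den_def by simp
      finally show "Sigma_proj a = \<zero>\<^bsub>Sigma_ring\<^esub> \<longleftrightarrow>
        (\<exists>s\<in>S_den. s \<otimes>\<^bsub>Gamma_ring\<^esub> a = \<zero>\<^bsub>Gamma_ring\<^esub>)" .
    qed
    show ?thesis unfolding left_ring_of_fractions_def
      using RG RQ SG hom units fr ker by blast
  qed
qed

end
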